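(* Let $s,t,z$ be positive integers and let $N_{\text{AGE}}$ be the quantity defined in the context. Then $N_{\text{AGE}}\le N_{\text{Ent}}$, $N_{\text{AGE}}\le N_{\text{SSMM}}$, $N_{\text{AGE}}\le N_{\text{GCSA-NA}}$, and, whenever $s,t$ are not both $1$, $N_{\text{AGE}}\le N_{\text{PolyDot}}$, where these are defined in the context.
   Context: $N_{\text{AGE}}=2s+2z-1$ if $t=1$, and for $t\ge2$, $N_{\text{AGE}}=\min_{\lambda\in\{0,\dots,z\}}\Gamma(\lambda)$ with $\theta=ts+\lambda$, $q=\min\{\lfloor\frac{z-1}{\lambda}\rfloor,t-1\}$ ($q=t-1$ when $\lambda=0$), and $\Gamma(\lambda)=2st^2+2z-1$ if $z>ts-s,\lambda=0$; $st^2+3st-2s+t(z-1)+1$ if $z\le ts-s,\lambda=0$; $2ts+(ts+z)(t-1)+2z-1$ if $\lambda=z$; $(q+2)ts+\theta(t-1)+2z-1$ if $z>ts,0<\lambda<z$; $3ts+\theta(t-1)+2z-1$ if $z\le ts,0<\lambda<z,ts<\lambda+s-1$; $2ts+\theta(t-1)+(q+2)z-q-1$ if $\lambda+s-1<z\le ts,0<\lambda<z,q\lambda\ge s$; $\theta(t+1)+q(z-1)-2\lambda+z+ts+\min\{0,z+s(1-t)-\lambda q-1\}$ if $\lambda+s-1<z\le ts,0<\lambda<z,q\lambda<s$; $2ts+\theta(t-1)+3z+(\lambda+s-1)q-\lambda-s-1$ if $z\le\lambda+s-1\le ts,0<\lambda<z,q\lambda\ge s$; $\theta(t+1)+q(s-1)-3\lambda+3z-1+\min\{0,ts-z+1+\lambda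 q-s\}$ if $z\le\lambda+s-1\le ts,0<\lambda<z,q\lambda<s$. (This is the number of workers of AGE-CMPC.) Baselines: $N_{\text{Ent}}=2st^2+2z-1$ if $z>ts-s$ and $st^2+3st-2s+tz-t+1$ if $z\le ts-s$ (Entangled-CMPC); $N_{\text{SSMM}}=(t+1)(ts+z)-1$; $N_{\text{GCSA-NA}}=2st^2+2z-1$ (single product). With $\theta'=2ts-t$, $p=\min\{\lfloor\frac{z-1}{\theta'-ts}\rfloor,t-1\}$ ($p=t-1$ when $s=1$), $\upsilon'=\max\{ts-2t-s+2,\frac{ts-2t+1}{2}\}$: $N_{\text{PolyDot}}=(p+2)ts+\theta'(t-1)+2z-1$ if $ts<z$ or $t=1$; $2ts+\theta'(t-1)+3z-1$ if $ts-t<z\le ts,s,t\ne1$; $2ts+\theta'(t-1)+2z-1$ if $ts-2t<z\le ts-t,s,t\ne1$; $(t+1)ts+(t-1)(z+t-1)+2z-1$ if $\upsilon'<z\le ts-2t,s,t\ne1$; $\theta't+z$ if $z\le\upsilon',s,t\ne1$; $t^2+2t+tz-1$ if $s=1,t\ge z,t\ne1$. *)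

theory Defs
  imports Complex_Main
begin

definition age_q :: "int \<Rightarrow> int \<Rightarrow> int \<Rightarrow> int" where
  "age_q t z l = (if l = 0 then t - 1 else min ((z - 1) div l) (t - 1))"

definition age_Gamma :: "int \<Rightarrow> int \<Rightarrow> int \<Rightarrow> int \<Rightarrow> int" where
  "age_Gamma s t z l =
    (let \<theta> = t*s + l; q = age_q t z l in
     if l = 0 then
       (if z > t*s - s then 2*s*t^2 + 2*z - 1
        else s*t^2 + 3*s*t - 2*s + t*(z - 1) + 1)
     else if l = z then 2*t*s + (t*s + z)*(t - 1) + 2*z - 1
     else if z > t*s then (q + 2)*t*s + \<theta>*(t - 1) + 2*z - 1
     else if t*s < l + s - 1 then 3*t*s + \<theta>*(t - 1) + 2*z - 1
     else if l + s - 1 < z then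
       (if q*l \<ge> s then 2*t*s + \<theta>*(t - 1) + (q + 2)*z - q - 1
        else \<theta>*(t + 1) + q*(z - 1) - 2*l + z + t*s + min 0 (z + s*(1 - t) - l*q - 1))
     else
       (if q*l \<ge> s then 2*t*s + \<theta>*(t - 1) + 3*z + (l + s - 1)*q - l - s - 1
        else \<theta>*(t + 1) + q*(s - 1) - 3*l + 3*z - 1 + min 0 (t*s - z + 1 + l*q - s)))"

definition N_AGE :: "int \<Rightarrow> int \<Rightarrow> int \<Rightarrow> int" where
  "N_AGE s t z = (if t = 1 then 2*s + 2*z - 1
                  else Min ((\<lambda>l. age_Gamma s t z l) ` {0..z}))"

definition N_Ent :: "int \<Rightarrow> int \<Rightarrow> int \<Rightarrow> int" where
  "N_Ent s t z = (if z > t*s - s then 2*s*t^2 + 2*z - 1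
                  else s*t^2 + 3*s*t - 2*s + t*z - t + 1)"

definition N_SSMM :: "int \<Rightarrow> int \<Rightarrow> int \<Rightarrow> int" where
  "N_SSMM s t z = (t + 1)*(t*s + z) - 1"

definition N_GCSA_NA :: "int \<Rightarrow> int \<Rightarrow> int \<Rightarrow> int" where
  "N_GCSA_NA s t z = 2*s*t^2 + 2*z - 1"

definition polydot_p :: "int \<Rightarrow> int \<Rightarrow> int \<Rightarrow> int" where
  "polydot_p s t z = (if s = 1 then t - 1
                      else min ((z - 1) div ((2*t*s - t) - t*s)) (t - 1))"

definition polydot_upsilon :: "int \<Rightarrow> int \<Rightarrow> real" where
  "polydot_upsilon s t = max (of_int (t*s - 2*t - s + 2)) (of_int (t*s - 2*t + 1) / 2)"

definition N_PolyDot :: "int \<Rightarrow> int \<Rightarrow> int \<Rightarrow> int" where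
  "N_PolyDot s t z =
    (let \<theta>' = 2*t*s - t; p = polydot_p s t z in
     if t*s < z \<or> t = 1 then (p + 2)*t*s + \<theta>'*(t - 1) + 2*z - 1
     else if s \<noteq> 1 \<and> t*s - t < z \<and> z \<le> t*s then 2*t*s + \<theta>'*(t - 1) + 3*z - 1
     else if s \<noteq> 1 \<and> t*s - 2*t < z \<and> z \<le> t*s - t then 2*t*s + \<theta>'*(t - 1) + 2*z - 1
     else if s \<noteq> 1 \<and> polydot_upsilon s t < of_int z \<and> z \<le> t*s - 2*t
       then (t + 1)*t*s + (t - 1)*(z + t - 1) + 2*z - 1
     else if s \<noteq> 1 \<and> of_int z \<le> polydot_upsilon s t then \<theta>'*t + z
     else t^2 + 2*t + t*z - 1)"

end

theory Submission
  imports Defs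
begin

lemma G0: "t \<ge> 2 \<Longrightarrow> age_Gamma s t z 0 = N_Ent s t z"
  unfolding age_Gamma_def N_Ent_def Let_def by (simp add: algebra_simps)

lemma Gz: "z \<ge> 1 \<Longrightarrow> age_Gamma s t z z = N_SSMM s t z"
  unfolding age_Gamma_def N_SSMM_def Let_def by (simp add: algebra_simps)

lemma AGE_le:
  assumes "t \<noteq> 1" "0 \<le> l" "l \<le> z"
  shows "N_AGE s t z \<le> age_Gamma s t z l"
proof -
  have "age_Gamma s t z l \<in> (\<lambda>l. age_Gamma s t z l) ` {0..z}" using assms by auto
  then show ?thesis unfolding N_AGE_def using assms(1) by (simp add: Min_le)
qed

lemma Ent_GC:
  fixes s t z :: int
  assumes "s \<ge> 1" "t \<ge> 2" "z \<ge> 1"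
  shows "N_Ent s t z \<le> N_GCSA_NA s t z"
proof (cases "z > t*s - s")
  case True then show ?thesis unfolding N_Ent_def N_GCSA_NA_def by simp
next
  case False
  have "(t-2)*z \<le> (t-2)*(s*(t-1)+1)"
    by (rule mult_left_mono) (use False assms in \<open>auto simp: algebra_simps\<close>)
  then have "t*z - 2*z \<le> s*t*t - 3*s*t + 2*s + t - 2" by (simp add: algebra_simps)
  then show ?thesis using False unfolding N_Ent_def N_GCSA_NA_def
    by (simp add: algebra_simps power2_eq_square)
qed

lemma ups_iff:
  "(of_int z \<le> polydot_upsilon s t) \<longleftrightarrow> (z \<le> t*s - 2*t - s + 2 \<or> 2*z \<le> t*s - 2*t + 1)"
proof -
  have "(of_int z \<le> (of_int (t*s - 2*t + 1) / 2 :: real)) \<longleftrightarrow> 2*z \<le> t*s - 2*t + 1"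
  proof -
    have "(of_int z \<le> (of_int (t*s - 2*t + 1) / 2 :: real)) \<longleftrightarrow> of_int (2*z) \<le> (of_int (t*s - 2*t + 1) :: real)"
      by (simp add: field_simps)
    also have "\<dots> \<longleftrightarrow> 2*z \<le> t*s - 2*t + 1" by (rule of_int_le_iff)
    finally show ?thesis .
  qed
  then show ?thesis unfolding polydot_upsilon_def by (simp only: le_max_iff_disj of_int_le_iff)
qed

lemma PD_t1:
  fixes s z :: int
  assumes "s \<ge> 2" "z \<ge> 1"
  shows "N_PolyDot s 1 z = 2*s + 2*z - 1"
proof -
  have "(z - 1) div (s - 1) \<ge> 0" using assms by (simp add: pos_imp_zdiv_nonneg_iff)
  then have "polydot_p s 1 z = 0" unfolding polydot_p_def using assms by simp
  then show ?thesis unfolding N_PolyDot_def Let_def by simp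
qed

lemma PD_bound:
  fixes s t z :: int
  assumes s1: "s \<ge> 1" and t2: "t \<ge> 2" and z1: "z \<ge> 1"
  shows "N_AGE s t z \<le> N_PolyDot s t z"
proof -
  have t1: "t \<noteq> 1" using t2 by simp
  have A0: "N_AGE s t z \<le> age_Gamma s t z 0" using AGE_le[OF t1] z1 by simp
  have Az: "N_AGE s t z \<le> N_SSMM s t z" using AGE_le[OF t1, of z z] z1 Gz[OF z1] by simp
  have ts: "t*s \<ge> t" using s1 t2 by simp
  show ?thesis
  proof (cases "t*s < z")
    case True
    show ?thesis
    proof (cases "s = 1")
      case s: True
      have "age_Gamma s t z 0 = 2*t^2 + 2*z - 1"
        unfolding age_Gamma_def using True s by simp
      moreover have "N_PolyDot s t z = 2*t^2 + 2*z - 1"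
        unfolding N_PolyDot_def polydot_p_def Let_def using True s
        by (simp add: algebra_simps power2_eq_square)
      ultimately show ?thesis using A0 by simp
    next
      case s: False
      have s2: "s \<ge> 2" using s s1 by simp
      define l where "l = t*s - t"
      have lpos: "l > 0" unfolding l_def
          proof -
            have "t*2 \<le> t*s" using s2 t2 by simp
            then show "t*s - t > 0" using t2 by simp
          qed
      have "l < z" unfolding l_def using True t2 by simp
      have e: "2*t*s - t - t*s = l" unfolding l_def by simp
      have "age_Gamma s t z l = N_PolyDot s t z"
        unfolding age_Gamma_def N_PolyDot_def polydot_p_def age_q_def Let_def e
        using lpos \<open>l < z\<close> True s z1 s1 t2 by (simp add: l_def algebra_simps)
      moreover have "N_AGE s t z \<le> age_Gamma s t z l"
        by (rule AGE_le) (use t1 lpos \<open>l < z\<close> in auto)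
      ultimately show ?thesis by simp
    qed
  next
    case nz: False
    show ?thesis
    proof (cases "s = 1")
      case s: True
      have "N_PolyDot s t z = t^2 + 2*t + t*z - 1"
        unfolding N_PolyDot_def Let_def using t1 nz s t2 by simp
      moreover have "N_SSMM s t z = t^2 + t*z + t + z - 1"
        unfolding N_SSMM_def using s by (simp add: algebra_simps power2_eq_square)
      ultimately show ?thesis using Az nz s by simp
    next
      case s: False
      have s2: "s \<ge> 2" using s s1 by simp
      show ?thesis
      proof (cases "t*s - t < z")
        case c2: True
        have PD: "N_PolyDot s t z = 2*t*s + (2*t*s - t)*(t-1) + 3*z - 1"
          unfolding N_PolyDot_def Let_def using t1 nz s c2 by simp
        show ?thesis
        proof (cases "t \<le> s + 1")
          case True
          have "(t-1)*(s-1) \<ge> 0" using s2 t2 by simp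
          have "(t-2)*z \<le> (t-2)*(t*s)" by (rule mult_left_mono) (use nz t2 in auto)
          moreover have "(t-2)*(t*s) \<le> (t-1)*(t*(s-1))"
          proof -
            have "(t*s)*(t-2) \<le> (t*s)*(t-1) - t*(t-1)"
            proof -
              have "t*(t-1) \<le> t*s" using True t2 by (intro mult_left_mono) auto
              then show ?thesis by (simp add: algebra_simps)
            qed
            then show ?thesis by (simp add: algebra_simps)
          qed
          ultimately have "(t-2)*z \<le> (t-1)*(t*(s-1))" by simp
          then have "N_SSMM s t z \<le> N_PolyDot s t z" unfolding PD N_SSMM_def
            by (simp add: algebra_simps)
          then show ?thesis using Az by simp
        next
          case False
          define l where "l = t*s - t"
          have lpos: "l > 0" unfolding l_def
          proof -
            have "t*2 \<le> t*s" using s2 t2 by simp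
            then show "t*s - t > 0" using t2 by simp
          qed
          have "l < z" using c2 l_def by simp
          have q: "(z - 1) div l = 1"
          proof (rule int_div_pos_eq[where r = "z - 1 - l"])
            show "z - 1 = l * 1 + (z - 1 - l)" by simp
            show "0 \<le> z - 1 - l" using \<open>l < z\<close> by simp
            have "t*2 \<le> t*s" using s2 t2 by simp
            then show "z - 1 - l < l" using nz unfolding l_def by linarith
          qed
          have qa: "age_q t z l = 1" unfolding age_q_def using q t2 lpos by simp
          have "1*1 \<le> (t-1)*(s-1)" using s2 t2 by (intro mult_mono) auto
          then have ls: "l \<ge> s" unfolding l_def by (simp add: algebra_simps)
          have nb: "\<not> t*s < l + s - 1" using False unfolding l_def by simp
          have th: "t*s + l = 2*t*s - t" unfolding l_def by simp
          have "age_Gamma s t z l \<le> 2*t*s + (2*t*s - t)*(t-1) + 3*z - 1"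
            unfolding age_Gamma_def Let_def qa th using lpos \<open>l < z\<close> nz nb ls
            by (auto simp: algebra_simps)
          moreover have "N_AGE s t z \<le> age_Gamma s t z l"
        by (rule AGE_le) (use t1 lpos \<open>l < z\<close> in auto)
      ultimately show ?thesis using PD by simp
        qed
      next
        case n2: False
        show ?thesis
        proof (cases "t*s - 2*t < z")
          case c3: True
          have PD: "N_PolyDot s t z = 2*t*s + (2*t*s - t)*(t-1) + 2*z - 1"
            unfolding N_PolyDot_def Let_def using t1 nz s n2 c3 by simp
          have "(t-1)*z \<le> (t-1)*(t*s - t)" by (rule mult_left_mono) (use n2 t2 in auto)
          then have "N_SSMM s t z \<le> N_PolyDot s t z" unfolding PD N_SSMM_def
            by (simp add: algebra_simps)
          then show ?thesis using Az by simp
        next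
          case n3: False
          show ?thesis
          proof (cases "of_int z \<le> polydot_upsilon s t")
            case c5: True
            have PD: "N_PolyDot s t z = (2*t*s - t)*t + z"
              unfolding N_PolyDot_def Let_def using t1 nz s n2 n3 c5 by auto
            have key: "t*z \<le> t*t*s - t*t - t*s + 1"
            proof (cases "z \<le> t*s - 2*t - s + 2")
              case True
              have "t*z \<le> t*(t*s - 2*t - s + 2)" using True t2 by (intro mult_left_mono) auto
              moreover have "(t-1)*(t-1) \<ge> 0" by simp
              ultimately show ?thesis by (simp add: algebra_simps)
            next
              case False
              then have h: "2*z \<le> t*s - 2*t + 1" using c5 ups_iff by blast
              have t3: "t \<ge> 3"
              proof (rule ccontr)
                assume "\<not> t \<ge> 3" then have "t = 2" using t2 by simp
                then show False using h False by simp
              qed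
              have "t*(2*z) \<le> t*(t*s - 2*t + 1)" using h t2 by (intro mult_left_mono) auto
              moreover have "(t*s)*(t-3) \<ge> 0" using t3 s1 t2 by simp
              ultimately have "2*(t*z) \<le> t*s*t - 2*t*t + t" "3*(t*s) \<le> t*s*t"
                by (simp_all add: algebra_simps)
              then show ?thesis using ts by (simp add: algebra_simps)
            qed
            have "N_SSMM s t z \<le> N_PolyDot s t z" unfolding PD N_SSMM_def
              using key by (simp add: algebra_simps)
            then show ?thesis using Az by simp
          next
            case n5: False
            then have "polydot_upsilon s t < of_int z" by simp
            have PD: "N_PolyDot s t z = (t + 1)*t*s + (t - 1)*(z + t - 1) + 2*z - 1"
              unfolding N_PolyDot_def Let_def using t1 nz s n2 n3 n5 by auto
            have "(t-1)*(t-1) \<ge> 0" by simp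
            then have "N_SSMM s t z \<le> N_PolyDot s t z" unfolding PD N_SSMM_def
              by (simp add: algebra_simps)
            then show ?thesis using Az by simp
          qed
        qed
      qed
    qed
  qed
qed

theorem lemma4:
  fixes s t z :: int
  assumes "s \<ge> 1" and "t \<ge> 1" and "z \<ge> 1"
  shows "N_AGE s t z \<le> N_Ent s t z \<and> N_AGE s t z \<le> N_SSMM s t z \<and>
         N_AGE s t z \<le> N_GCSA_NA s t z \<and>
         (\<not> (s = 1 \<and> t = 1) \<longrightarrow> N_AGE s t z \<le> N_PolyDot s t z)"
proof (cases "t = 1")
  case True
  have a: "N_AGE s t z = 2*s + 2*z - 1" unfolding N_AGE_def using True by simp
  have "N_Ent s t z = 2*s + 2*z - 1" unfolding N_Ent_def using True assms by simp
  moreover have "N_SSMM s t z = 2*s + 2*z - 1" unfolding N_SSMM_def using True by simp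
  moreover have "N_GCSA_NA s t z = 2*s + 2*z - 1" unfolding N_GCSA_NA_def using True by simp
  moreover have "\<not> (s = 1 \<and> t = 1) \<longrightarrow> N_PolyDot s t z = 2*s + 2*z - 1"
    using PD_t1[of s z] True assms by auto
  ultimately show ?thesis using a by simp
next
  case False
  then have t2: "t \<ge> 2" using assms by simp
  have E: "N_AGE s t z \<le> N_Ent s t z" using AGE_le[OF False, of 0 z] G0[OF t2] assms by simp
  have S: "N_AGE s t z \<le> N_SSMM s t z" using AGE_le[OF False, of z z] Gz assms by simp
  show ?thesis using E S Ent_GC[OF assms(1) t2 assms(3)] PD_bound[OF assms(1) t2 assms(3)]
    by linarith
qed

end
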